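(* Let $q\in\mathbb{C}$ with $|q|<1$ and let $k,l\ge0$ be integers. Then for $x\in[0,1]$, $$B_{k,l}(x,q)=\frac{k!}{[k]_q!}x^k\sum_{m=0}^l\frac{[m]_q!}{m!}S(m,k)\,\beta_{l-m}^{(k)}((1-x)_q,q)\binom{l}{m}_q.$$
   Context: For a number $x$, $[x]_q=\frac{1-q^x}{1-q}$; $[n]_q!=[n]_q\cdots[1]_q$, $[0]_q!=1$; $\binom{n}{k}_q=\frac{[n]_q!}{[k]_q![n-k]_q!}$ for $0\le k\le n$ and $0$ for $k>n$. $(1-b)_q^n=\prod_{i=1}^n(1-bq^{i-1})$. $B_{k,n}(x,q)=\binom{n}{k}_q x^k(1-x)_q^{n-k}$ if $n\ge k$ and $0$ if $n<k$. $S(m,k)$ are the Stirling numbers of the second kind: $\frac{(e^t-1)^k}{k!}=\sum_{m\ge0}S(m,k)\frac{t^m}{m!}$. $B_m^{(k)}$ are the Bernoulli numbers of order $k$: $\left(\frac{t}{e^t-1}\right)^k=\sum_{m\ge0}B_m^{(k)}\frac{t^m}{m!}$. The $q$-Bernoulli polynomials of order $k$ are defined by $\left(\frac{z}{e^z-1}\right)^k e_q(zy)=\sum_{n\ge0}\beta_n^{(k)}(y,q)\frac{z^n}{[n]_q!}$, where $e_q(zy)=\sum_{j\ge0}\frac{y^jz^j}{[j]_q!}$, so $\beta_n^{(k)}(y,q)=\sum_{m=0}^n\binom{n}{m}_q\frac{[m]_q!}{m!}B_m^{(k)}y^{n-m}$. The symbol $\beta_n^{(k)}((1-x)_q,q)$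 is understood umbrally, i.e. each power $y^{j}$ is replaced by $(1-x)_q^{j}$: $\beta_n^{(k)}((1-x)_q,q)=\sum_{m=0}^n\binom{n}{m}_q\frac{[m]_q!}{m!}B_m^{(k)}(1-x)_q^{n-m}$ (equivalently, $\left(\frac{t}{e^t-1}\right)^k\sum_{j\ge0}\frac{(1-x)_q^jt^j}{[j]_q!}=\sum_{n\ge0}\beta_n^{(k)}((1-x)_q,q)\frac{t^n}{[n]_q!}$ as formal power series). *)

theory Defs
  imports "HOL-Combinatorics.Stirling" "HOL-Computational_Algebra.Formal_Power_Series"
begin

definition qint :: "complex \<Rightarrow> nat \<Rightarrow> complex" where
  "qint q n = (1 - q ^ n) / (1 - q)"

definition qfact :: "complex \<Rightarrow> nat \<Rightarrow> complex" where
  "qfact q n = (\<Prod>i=1..n. qint q i)"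

definition qbinom :: "complex \<Rightarrow> nat \<Rightarrow> nat \<Rightarrow> complex" where
  "qbinom q n k = (if k \<le> n then qfact q n / (qfact q k * qfact q (n - k)) else 0)"

text \<open>(1 - b)_q^n = prod_{i=1}^n (1 - b q^(i-1))\<close>
definition qpoch :: "complex \<Rightarrow> complex \<Rightarrow> nat \<Rightarrow> complex" where
  "qpoch b q n = (\<Prod>i=1..n. 1 - b * q ^ (i - 1))"

definition qBernstein :: "nat \<Rightarrow> nat \<Rightarrow> complex \<Rightarrow> complex \<Rightarrow> complex" where
  "qBernstein k n x q = (if k \<le> n then qbinom q n k * x ^ k * qpoch x q (n - k) else 0)"

text \<open>The formal power series t/(e^t - 1).\<close>
definition bern_gen :: "complex fps" where
  "bern_gen = inverse (fps_shift 1 (fps_exp 1 - 1))"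

definition bernoulli_order :: "nat \<Rightarrow> nat \<Rightarrow> complex" where
  "bernoulli_order k m = fact m * fps_nth (bern_gen ^ k) m"

text \<open>beta_n^(k)((1-x)_q, q), umbral reading\<close>
definition qbeta_umbral :: "nat \<Rightarrow> nat \<Rightarrow> complex \<Rightarrow> complex \<Rightarrow> complex" where
  "qbeta_umbral k n x q =
     (\<Sum>m=0..n. qbinom q n m * qfact q m / fact m * bernoulli_order k m * qpoch x q (n - m))"

end

theory Submission imports Defs begin

lemma stir_fps:
  "fact m * fps_nth ((fps_exp (1::complex) - 1) ^ k) m = fact k * of_nat (Stirling m k)"
proof (induction m arbitrary: k)
  case 0
  then show ?case by (cases k) auto
next
  case (Suc m)
  show ?case
  proof (cases k)
    case 0 then show ?thesis by simp
  next
    case (Suc k')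
    let ?E = "fps_exp (1::complex) - 1"
    have d0: "fps_deriv (?E ^ Suc k') = of_nat (Suc k') * ?E ^ k' * fps_exp 1"
      by (simp only: fps_deriv_power') (simp add: mult.commute)
    have d: "fps_deriv (?E ^ Suc k') = of_nat (Suc k') * (?E ^ Suc k' + ?E ^ k')"
      unfolding d0 by (simp add: algebra_simps)
    define F where "F = ?E ^ Suc k'"
    define G where "G = ?E ^ k'"
    have dF: "fps_deriv F = of_nat (Suc k') * (F + G)" using d unfolding F_def G_def .
    have "of_nat (Suc m) * fps_nth F (Suc m) = fps_nth (fps_deriv F) m"
      by (simp only: fps_deriv_nth) simp
    also have "\<dots> = of_nat (Suc k') * (fps_nth F m + fps_nth G m)"
      unfolding dF by (simp add: fps_of_nat[symmetric] del: fps_of_nat)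
    finally have eq: "of_nat (Suc m) * fps_nth F (Suc m) = of_nat (Suc k') * (fps_nth F m + fps_nth G m)" .
    have "fact (Suc m) * fps_nth F (Suc m) = fact m * (of_nat (Suc m) * fps_nth F (Suc m))"
      by (simp add: fact_Suc algebra_simps)
    also have "\<dots> = fact m * (of_nat (Suc k') * (fps_nth F m + fps_nth G m))" by (simp only: eq)
    also have "\<dots> = of_nat (Suc k') * (fact m * fps_nth F m + fact m * fps_nth G m)"
      by (simp add: algebra_simps)
    finally have "fact (Suc m) * fps_nth F (Suc m) =
        of_nat (Suc k') * (fact m * fps_nth F m + fact m * fps_nth G m)" .
    hence "fact (Suc m) * fps_nth (?E ^ Suc k') (Suc m) =
        of_nat (Suc k') * (fact m * fps_nth (?E ^ Suc k') m + fact m * fps_nth (?E ^ k') m)"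
      unfolding F_def G_def .
    also have "\<dots> = of_nat (Suc k') * (fact (Suc k') * of_nat (Stirling m (Suc k')) + fact k' * of_nat (Stirling m k'))"
      by (simp only: Suc.IH)
    also have "\<dots> = fact (Suc k') * of_nat (Stirling (Suc m) (Suc k'))"
      by (simp add: fact_Suc algebra_simps)
    finally show ?thesis using Suc by simp
  qed
qed

lemma bern_prod: "bern_gen ^ k * (fps_exp (1::complex) - 1) ^ k = fps_X ^ k"
proof -
  define A where "A = fps_shift 1 (fps_exp (1::complex) - 1)"
  have e: "fps_exp (1::complex) - 1 = A * fps_X" unfolding A_def
  proof (rule fps_shift_times_fps_X[symmetric], rule subdegree_geI)
    have "fps_nth (fps_exp (1::complex) - 1) 1 = 1" by simp
    then show "fps_exp (1::complex) - 1 \<noteq> 0" by (metis fps_zero_nth zero_neq_one)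
  qed (simp add: less_Suc_eq_0_disj)
  have "bern_gen * A = 1" unfolding bern_gen_def A_def
    by (rule inverse_mult_eq_1) simp
  moreover have "bern_gen ^ k * (A * fps_X)^k = (bern_gen * A)^k * fps_X^k"
    by (simp only: power_mult_distrib mult_ac)
  ultimately show ?thesis by (simp only: e) simp
qed

lemma conv:
  "(\<Sum>i\<le>s. of_nat (Stirling i k) / fact i * (bernoulli_order k (s-i) / fact (s-i)))
     = (if s = k then 1 / fact k else (0::complex))"
proof -
  let ?P = "(fps_exp (1::complex) - 1) ^ k"
  have nP: "fps_nth ?P i = fact k * of_nat (Stirling i k) / fact i" for i
    using stir_fps[of i k] by (simp add: field_simps)
  have nB: "fps_nth (bern_gen ^ k) j = bernoulli_order k j / fact j" for j
    by (simp add: bernoulli_order_def)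
  have "fps_nth (?P * bern_gen ^ k) s = (if s = k then 1 else 0)"
    using bern_prod[of k] by (simp add: mult.commute)
  moreover have "fps_nth (?P * bern_gen ^ k) s =
      fact k * (\<Sum>i\<le>s. of_nat (Stirling i k) / fact i * (bernoulli_order k (s-i) / fact (s-i)))"
    unfolding fps_mult_nth nP nB by (simp add: sum_distrib_left atLeast0AtMost mult_ac)
  ultimately show ?thesis by (auto simp: field_simps)
qed

lemma qint_nz: assumes "norm q < 1" "i \<ge> 1" shows "qint q i \<noteq> 0"
proof -
  have "norm (q ^ i) < 1" using assms by (simp add: norm_power power_less_one_iff)
  hence "q ^ i \<noteq> 1" by auto
  moreover have "q \<noteq> 1" using assms by auto
  ultimately show ?thesis by (simp add: qint_def)
qed

lemma qfact_nz: assumes "norm q < 1" shows "qfact q n \<noteq> 0"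
  unfolding qfact_def using qint_nz[OF assms] by (simp add: prod_zero_iff)

lemma qbinom_prod:
  assumes "norm q < 1" "m + j \<le> l"
  shows "qbinom q l m * qbinom q (l-m) j * qfact q m * qfact q j = qfact q l / qfact q (l-m-j)"
  using assms qfact_nz[OF assms(1)] by (simp add: qbinom_def field_simps)

theorem theorem10:
  fixes q :: complex and k l :: nat and x :: real
  assumes "norm q < 1" and "0 \<le> x" and "x \<le> 1"
  shows "qBernstein k l (complex_of_real x) q =
    fact k / qfact q k * (complex_of_real x) ^ k *
      (\<Sum>m=0..l. qfact q m / fact m * of_nat (Stirling m k) *
         qbeta_umbral k (l - m) (complex_of_real x) q * qbinom q l m)"
proof -
  let ?x = "complex_of_real x"
  define a where "a m = of_nat (Stirling m k) / (fact m :: complex)" for m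
  define b where "b j = bernoulli_order k j / (fact j :: complex)" for j
  define g where "g s = qfact q l / qfact q (l - s) * qpoch ?x q (l - s)" for s
  have tm: "qfact q m / fact m * of_nat (Stirling m k) *
         (qbinom q (l-m) j * qfact q j / fact j * bernoulli_order k j * qpoch ?x q (l - m - j))
         * qbinom q l m = a m * b j * g (m + j)" if "m + j \<le> l" for m j
  proof -
    have "qfact q m / fact m * of_nat (Stirling m k) *
         (qbinom q (l-m) j * qfact q j / fact j * bernoulli_order k j * qpoch ?x q (l - m - j))
         * qbinom q l m = a m * b j * qpoch ?x q (l - m - j) *
           (qbinom q l m * qbinom q (l-m) j * qfact q m * qfact q j)"
      by (simp add: a_def b_def)
    also have "\<dots> = a m * b j * g (m + j)"
      unfolding qbinom_prod[OF assms(1) that] g_def by (simp add: diff_diff_add)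
    finally show ?thesis .
  qed
  have "(\<Sum>m=0..l. qfact q m / fact m * of_nat (Stirling m k) *
         qbeta_umbral k (l - m) ?x q * qbinom q l m)
      = (\<Sum>m=0..l. \<Sum>j=0..l-m. a m * b j * g (m + j))"
    unfolding qbeta_umbral_def
  proof (intro sum.cong refl)
    fix m assume m: "m \<in> {0..l}"
    show "qfact q m / fact m * of_nat (Stirling m k) *
         (\<Sum>j=0..l-m. qbinom q (l-m) j * qfact q j / fact j * bernoulli_order k j * qpoch ?x q (l - m - j))
         * qbinom q l m = (\<Sum>j=0..l-m. a m * b j * g (m + j))"
      unfolding sum_distrib_left sum_distrib_right
      by (intro sum.cong refl tm) (use m in auto)
  qed
  also have "\<dots> = (\<Sum>(m,j)\<in>{(m,j). m + j \<le> l}. a m * b j * g (m + j))"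
  proof -
    have "Sigma {0..l} (\<lambda>m. {0..l-m}) = {(m,j). m + j \<le> l}" by auto
    then show ?thesis by (simp add: sum.Sigma)
  qed
  also have "\<dots> = (\<Sum>s\<le>l. \<Sum>i\<le>s. a i * b (s - i) * g (i + (s - i)))"
    by (rule sum.triangle_reindex_eq)
  also have "\<dots> = (\<Sum>s\<le>l. g s * (\<Sum>i\<le>s. a i * b (s - i)))"
    by (intro sum.cong refl) (simp add: sum_distrib_left mult_ac)
  also have "\<dots> = (\<Sum>s\<le>l. g s * (if s = k then 1 / fact k else 0))"
    unfolding a_def b_def by (simp only: conv)
  also have "\<dots> = (if k \<le> l then g k / fact k else 0)"
  proof -
    have fe: "(\<lambda>s. g s * (if s = k then 1 / fact k else 0)) = (\<lambda>s. if s = k then g k / fact k else 0)"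
      by auto
    then show ?thesis unfolding fe by simp
  qed
  finally have eq: "(\<Sum>m=0..l. qfact q m / fact m * of_nat (Stirling m k) *
         qbeta_umbral k (l - m) ?x q * qbinom q l m) = (if k \<le> l then g k / fact k else 0)" .
  show ?thesis unfolding eq
    using qfact_nz[OF assms(1)]
    by (simp add: qBernstein_def qbinom_def g_def field_simps)
qed

end
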